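(* Let $X$ be a finite-dimensional real vector space, $Y=X^*$ its dual, $N=X\times Y$ endowed with a Lebesgue measure $dz$ and the symplectic form $\omega$ described in the context. Let $H:[0,T]\times N\to\mathbb{R}$ be a smooth (time-dependent) hamiltonian, let $\phi:N\to\mathbb{R}\cup\{+\infty\}$ be a convex lower semicontinuous dissipation potential, let $F:N\to N$ be a map, and let $\alpha\in\mathbb{R}$, $\beta>0$. Let $\Psi\in Paths(H,F)$ and let $B\subset N$ be a Borel set; assume that the integrals below are well defined and that differentiation in $t$ may be exchanged with integration over $B$ (e.g. $B$ bounded and $\Psi,\partial_t\Psi$ jointly continuous). Then $$\mu(H,F)(B)-\mu(H,id)(B)\;\le\;\beta\,C(\Psi)(B).$$ Moreover, when $C(\Psi)(B)<+\infty$, equality holds if and only if for almost every $z\in B$ and $t\in[0,T]$ $$\omega\big(\dot\Psi_D(t,z),\dot\Psi(t,z)\big)=\phi(\dot\Psi(t,z))+\phi^{*\omega}(\dot\Psi_D(t,z)),$$ equivalently $\dot\Psi_D(t,z)\in\partial^{\omega}\phi(\dot\Psi(t,z))$ (the SBEN principle). Consequently, the minimal dissipation cost $C(\cdot)(B)$ over $Paths(H,F)$ is attained by any flow $\Psi\in Paths(H,F)$ satisfying $\dot\Psi_D(t,z)\in\partial^{\omega}\phi(\dot\Psi(t,z))$ for a.e. $z\in B$, $t\in[0,T]$.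
   Context: Notation: $\langle q,p\rangle$ denotes the duality pairing of $q\in X$, $p\in Y$. $N^*=Y\times X$ is dual to $N=X\times Y$ via $\langle\langle (p_1,q_1),(q_2,p_2)\rangle\rangle=\langle q_1,p_2\rangle+\langle q_2,p_1\rangle$. Define $J:N\to N^*$, $J(q,p)=(-p,q)$ and $J^*:N^*\to N$, $J^*(p,q)=(-q,p)$. The symplectic form on $N$ is $\omega(z_1,z_2)=\langle\langle Jz_1,z_2\rangle\rangle=\langle q_1,p_2\rangle-\langle q_2,p_1\rangle$ for $z_i=(q_i,p_i)$. For differentiable $H$, $DH(t,z)\in N^*$ is the gradient in $z$ and the symplectic gradient is $XH(t,z)=-J^*DH(t,z)\in N$ (i.e. $XH=(D_pH,-D_qH)$). For convex lsc $\Phi:N\to\mathbb{R}\cup\{+\infty\}$: the symplectic subdifferential at $z$ with $\Phi(z)<\infty$ is $\partial^\omega\Phi(z)=\{z'\in N:\ \Phi(z+z'')\ge\Phi(z)+\omega(z',z'')\ \forall z''\in N\}$; the symplectic Fenchel conjugate is $\Phi^{*\omega}(z')=\sup_{z\in N}\{\omega(z',z)-\Phi(z)\}$. (Symplectic Fenchel inequality: $\Phi(z)+\Phi^{*\omega}(z')\ge\omega(z',z)$, with equality iff $z'\in\partial^\omega\Phi(z)$.) $Paths(H,F)$ is the set of maps $\Psi:[0,T]\times N\to N$, smooth in $t$, with $\Psi(0,z)=z$ and $\Psi(T,z)=F(z)$ for all $z\in N$. For such $\Psi$, write $\dot\Psi=\partial_t\Psi$ and $\dot\Psi_D(t,z)=\dot\Psi(t,z)-XH(t,\Psi(t,z))$.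 Gibbs measures: for $\Psi\in Paths(H,F)$ and $t\in[0,T]$, $\mu_t(B)=\int_B \exp[-(\alpha+\beta H(t,\Psi(t,z)))]\,dz$ for Borel $B$; in particular $\mu(H,id)(B):=\mu_0(B)=\int_B\exp[-(\alpha+\beta H(0,z))]dz$ and $\mu(H,F)(B):=\mu_T(B)=\int_B\exp[-(\alpha+\beta H(T,F(z)))]dz$. Dissipation cost of $\Psi$ over $B$: $C(\Psi)(B)=\int_0^T\int_B\Big[\phi(\dot\Psi(t,z))+\phi^{*\omega}(\dot\Psi_D(t,z))-\frac{\partial H}{\partial t}(t,\Psi(t,z))\Big]\,d\mu_t(z)\,dt$. *)

theory Defs
  imports "HOL-Analysis.Analysis" "HOL-Probability.Probability"
begin

text \<open>X is a finite-dimensional real vector space 'a::euclidean_space;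
  its dual Y = X* is identified with 'a via the inner product, so the duality pairing
  <q,p> is q \<bullet> p. Elements of N* = Y \<times> X are pairs (p,q) :: 'a \<times> 'a as well.\<close>

definition dual_pair :: "('a::real_inner \<times> 'a) \<Rightarrow> ('a \<times> 'a) \<Rightarrow> real" where
  "dual_pair w z = snd w \<bullet> snd z + fst z \<bullet> fst w"

definition Jmap :: "('a::real_vector \<times> 'a) \<Rightarrow> ('a \<times> 'a)" where
  "Jmap z = (- snd z, fst z)"

definition Jstar :: "('a::real_vector \<times> 'a) \<Rightarrow> ('a \<times> 'a)" where
  "Jstar w = (- snd w, fst w)"

definition omega :: "('a::real_inner \<times> 'a) \<Rightarrow> ('a \<times> 'a) \<Rightarrow> real" where
  "omega z1 z2 = dual_pair (Jmap z1) z2"  \<comment> \<open>= <q1,p2> - <q2,p1>\<close>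

definition symp_grad :: "(real \<Rightarrow> 'a::real_vector \<times> 'a \<Rightarrow> 'a \<times> 'a) \<Rightarrow> real \<Rightarrow> 'a \<times> 'a \<Rightarrow> 'a \<times> 'a" where
  "symp_grad DH t z = - Jstar (DH t z)"

definition hamiltonian_C1 ::
  "real \<Rightarrow> (real \<Rightarrow> 'a::euclidean_space \<times> 'a \<Rightarrow> real) \<Rightarrow> (real \<Rightarrow> 'a \<times> 'a \<Rightarrow> real)
     \<Rightarrow> (real \<Rightarrow> 'a \<times> 'a \<Rightarrow> 'a \<times> 'a) \<Rightarrow> bool" where
  "hamiltonian_C1 T H dtH DH \<longleftrightarrow>
     (\<forall>t\<in>{0..T}. \<forall>z. ((\<lambda>(s, w). H s w) has_derivative
         (\<lambda>(ds, dz). ds * dtH t z + dual_pair (DH t z) dz)) (at (t, z) within {0..T} \<times> UNIV))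
   \<and> continuous_on ({0..T} \<times> UNIV) (\<lambda>(t, z). dtH t z)
   \<and> continuous_on ({0..T} \<times> UNIV) (\<lambda>(t, z). DH t z)"

definition ereal_convex :: "('b::real_vector \<Rightarrow> ereal) \<Rightarrow> bool" where
  "ereal_convex f \<longleftrightarrow> convex {(x, c::real). f x \<le> ereal c}"

definition ereal_lsc :: "('b::topological_space \<Rightarrow> ereal) \<Rightarrow> bool" where
  "ereal_lsc f \<longleftrightarrow> (\<forall>c::ereal. closed {x. f x \<le> c})"

definition symp_conj :: "('a::real_inner \<times> 'a \<Rightarrow> ereal) \<Rightarrow> 'a \<times> 'a \<Rightarrow> ereal" where
  "symp_conj \<phi> z' = (SUP z. ereal (omega z' z) - \<phi> z)"

definition symp_subdiff :: "('a::real_inner \<times> 'a \<Rightarrow> ereal) \<Rightarrow> 'a \<times> 'a \<Rightarrow> ('a \<times> 'a) set" where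
  "symp_subdiff \<phi> z = {z'. \<phi> z < \<infinity> \<and> (\<forall>z''. \<phi> (z + z'') \<ge> \<phi> z + ereal (omega z' z''))}"

definition paths :: "real \<Rightarrow> ('b \<Rightarrow> 'b) \<Rightarrow> (real \<Rightarrow> 'b \<Rightarrow> 'b::real_normed_vector)
     \<Rightarrow> (real \<Rightarrow> 'b \<Rightarrow> 'b) \<Rightarrow> bool" where
  "paths T F \<Psi> \<Psi>' \<longleftrightarrow>
     (\<forall>z. \<Psi> 0 z = z \<and> \<Psi> T z = F z)
   \<and> (\<forall>z. \<forall>t\<in>{0..T}. ((\<lambda>s. \<Psi> s z) has_vector_derivative \<Psi>' t z) (at t within {0..T}))
   \<and> (\<forall>z. continuous_on {0..T} (\<lambda>t. \<Psi>' t z))"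

definition gibbs :: "(real \<Rightarrow> 'b::euclidean_space \<Rightarrow> real) \<Rightarrow> real \<Rightarrow> real \<Rightarrow> real
     \<Rightarrow> ('b \<Rightarrow> 'b) \<Rightarrow> 'b measure" where
  "gibbs H \<alpha> \<beta> t G = density lborel (\<lambda>z. ennreal (exp (- (\<alpha> + \<beta> * H t (G z)))))"

definition eint_on :: "'b measure \<Rightarrow> 'b set \<Rightarrow> ('b \<Rightarrow> ereal) \<Rightarrow> ereal" where
  "eint_on M A f = enn2ereal (\<integral>\<^sup>+x\<in>A. e2ennreal (f x) \<partial>M)
                 - enn2ereal (\<integral>\<^sup>+x\<in>A. e2ennreal (- f x) \<partial>M)"

definition cost :: "real \<Rightarrow> (real \<Rightarrow> 'a::euclidean_space \<times> 'a \<Rightarrow> real) \<Rightarrow> (real \<Rightarrow> 'a \<times> 'a \<Rightarrow> real)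
     \<Rightarrow> (real \<Rightarrow> 'a \<times> 'a \<Rightarrow> 'a \<times> 'a) \<Rightarrow> ('a \<times> 'a \<Rightarrow> ereal) \<Rightarrow> real \<Rightarrow> real
     \<Rightarrow> (real \<Rightarrow> 'a \<times> 'a \<Rightarrow> 'a \<times> 'a) \<Rightarrow> (real \<Rightarrow> 'a \<times> 'a \<Rightarrow> 'a \<times> 'a) \<Rightarrow> ('a \<times> 'a) set \<Rightarrow> ereal" where
  "cost T H dtH DH \<phi> \<alpha> \<beta> \<Psi> \<Psi>' B =
     eint_on lborel {0..T} (\<lambda>t. eint_on (gibbs H \<alpha> \<beta> t (\<Psi> t)) B
        (\<lambda>z. \<phi> (\<Psi>' t z) + symp_conj \<phi> (\<Psi>' t z - symp_grad DH t (\<Psi> t z)) - ereal (dtH t (\<Psi> t z))))"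

text \<open>Regularity allowing differentiation under the integral sign: joint continuity of \<Psi>, \<Psi>'.\<close>
definition path_regular :: "real \<Rightarrow> (real \<Rightarrow> 'b \<Rightarrow> 'b::real_normed_vector) \<Rightarrow> (real \<Rightarrow> 'b \<Rightarrow> 'b) \<Rightarrow> bool" where
  "path_regular T \<Psi> \<Psi>' \<longleftrightarrow>
     continuous_on ({0..T} \<times> UNIV) (\<lambda>(t, z). \<Psi> t z) \<and> continuous_on ({0..T} \<times> UNIV) (\<lambda>(t, z). \<Psi>' t z)"

end

theory Submission
  imports Defs
begin



lemma omega_add2: "omega z' (z + w) = omega z' z + omega z' (w::'a::real_inner \<times> 'a)"
  by (simp add: omega_def dual_pair_def Jmap_def inner_add_left inner_add_right)

lemma omega_diff2: "omega z' (w - z) = omega z' w - omega z' (z::'a::real_inner \<times> 'a)"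
  by (simp add: omega_def dual_pair_def Jmap_def inner_diff_left inner_diff_right)

lemma fenchel_ge:
  assumes "\<phi> z \<noteq> - \<infinity>"
  shows "ereal (omega z' z) \<le> \<phi> z + symp_conj \<phi> z'"
proof (cases "\<phi> z")
  case (real a)
  have "ereal (omega z' z) - \<phi> z \<le> symp_conj \<phi> z'"
    unfolding symp_conj_def by (rule SUP_upper) simp
  then show ?thesis using real by (cases "symp_conj \<phi> z'") auto
qed (use assms in auto)

lemma fenchel_eq_iff:
  assumes "\<forall>z. \<phi> z \<noteq> - \<infinity>"
  shows "(ereal (omega z' z) = \<phi> z + symp_conj \<phi> z') \<longleftrightarrow> z' \<in> symp_subdiff \<phi> z"
proof
  assume eq: "ereal (omega z' z) = \<phi> z + symp_conj \<phi> z'"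
  then have fin: "\<phi> z \<noteq> \<infinity>" by auto
  then obtain a where a: "\<phi> z = ereal a" using assms[rule_format, of z] by (cases "\<phi> z") auto
  have c: "symp_conj \<phi> z' = ereal (omega z' z - a)"
    using eq a by (cases "symp_conj \<phi> z'") auto
  show "z' \<in> symp_subdiff \<phi> z"
    unfolding symp_subdiff_def
  proof (safe)
    show "\<phi> z < \<infinity>" using a by simp
    fix z''
    have "ereal (omega z' (z + z'')) - \<phi> (z + z'') \<le> symp_conj \<phi> z'"
      unfolding symp_conj_def by (rule SUP_upper) simp
    then have "ereal (omega z' z + omega z' z'') - \<phi> (z + z'') \<le> ereal (omega z' z - a)"
      using c by (simp add: omega_add2)
    then show "\<phi> z + ereal (omega z' z'') \<le> \<phi> (z + z'')"
      using a assms[rule_format, of "z+z''"] by (cases "\<phi> (z + z'')") auto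
  qed
next
  assume "z' \<in> symp_subdiff \<phi> z"
  then have lt: "\<phi> z < \<infinity>" and sub: "\<And>z''. \<phi> (z + z'') \<ge> \<phi> z + ereal (omega z' z'')"
    unfolding symp_subdiff_def by auto
  then obtain a where a: "\<phi> z = ereal a" using assms[rule_format, of z] by (cases "\<phi> z") auto
  have "symp_conj \<phi> z' \<le> ereal (omega z' z - a)"
    unfolding symp_conj_def
  proof (rule SUP_least)
    fix w
    have "\<phi> (z + (w - z)) \<ge> \<phi> z + ereal (omega z' (w - z))" by (rule sub)
    then have "\<phi> w \<ge> ereal (a + omega z' w - omega z' z)" using a by (simp add: omega_diff2 add_diff_eq)
    then show "ereal (omega z' w) - \<phi> w \<le> ereal (omega z' z - a)"
      using assms[rule_format, of w] by (cases "\<phi> w") auto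
  qed
  moreover have "ereal (omega z' z) - \<phi> z \<le> symp_conj \<phi> z'"
    unfolding symp_conj_def by (rule SUP_upper) simp
  ultimately have "symp_conj \<phi> z' = ereal (omega z' z - a)" using a by simp
  then show "ereal (omega z' z) = \<phi> z + symp_conj \<phi> z'" using a by simp
qed


lemma ptwise_split:
  fixes g :: real and h :: ereal
  assumes "0 \<le> h"
  shows "e2ennreal (ereal g + h) + ennreal (- g) = e2ennreal (- (ereal g + h)) + ennreal g + e2ennreal h"
proof (cases h)
  case (real r)
  then have r: "0 \<le> r" using assms by simp
  have e1: "e2ennreal (ereal g + h) = ennreal (g + r)" using real by simp
  have e2: "e2ennreal (- (ereal g + h)) = ennreal (- g - r)" using real by simp
  have e3: "e2ennreal h = ennreal r" using real by simp
  consider "0 \<le> g" | "g < 0" "0 \<le> g + r" | "g + r < 0" by linarith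
  then show ?thesis
  proof cases
    case 1
    have "ennreal (g + r) = ennreal g + ennreal r" using 1 r by (rule ennreal_plus)
    moreover have "ennreal (- g) = 0" "ennreal (- g - r) = 0" using 1 r by (auto intro: ennreal_neg)
    ultimately show ?thesis unfolding e1 e2 e3 by simp
  next
    case 2
    have "ennreal (g + r) + ennreal (- g) = ennreal r" using 2 r
      by (subst ennreal_plus[symmetric]) auto
    moreover have "ennreal g = 0" "ennreal (- g - r) = 0" using 2 r by (auto intro: ennreal_neg)
    ultimately show ?thesis unfolding e1 e2 e3 by simp
  next
    case 3
    have "ennreal (- g - r) + ennreal r = ennreal (- g)" using 3 r
      by (subst ennreal_plus[symmetric]) auto
    moreover have "ennreal g = 0" "ennreal (g + r) = 0" using 3 r by (auto intro: ennreal_neg)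
    ultimately show ?thesis unfolding e1 e2 e3 by simp
  qed
next
  case PInf then show ?thesis by simp
next
  case MInf then show ?thesis using assms by simp
qed

lemma eint_on_split:
  fixes g :: "'b \<Rightarrow> real" and h :: "'b \<Rightarrow> ereal"
  assumes A: "A \<in> sets M" and gi: "integrable M (\<lambda>x. indicator A x * g x)"
    and hm: "h \<in> borel_measurable M" and h0: "\<And>x. 0 \<le> h x"
  shows "eint_on M A (\<lambda>x. ereal (g x) + h x)
     = ereal (\<integral>x. indicator A x * g x \<partial>M) + enn2ereal (\<integral>\<^sup>+x\<in>A. e2ennreal (h x) \<partial>M)"
proof -
  have gm[measurable]: "(\<lambda>x. indicator A x * g x) \<in> borel_measurable M" using gi by auto
  have Am[measurable]: "A \<in> sets M" by fact
  have hm'[measurable]: "h \<in> borel_measurable M" by fact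
  define P where "P = (\<integral>\<^sup>+x. e2ennreal (ereal (g x) + h x) * indicator A x \<partial>M)"
  define Q where "Q = (\<integral>\<^sup>+x. e2ennreal (- (ereal (g x) + h x)) * indicator A x \<partial>M)"
  define Gp where "Gp = (\<integral>\<^sup>+x. ennreal (indicator A x * g x) \<partial>M)"
  define Gm where "Gm = (\<integral>\<^sup>+x. ennreal (- (indicator A x * g x)) \<partial>M)"
  define Hh where "Hh = (\<integral>\<^sup>+x. e2ennreal (h x) * indicator A x \<partial>M)"
  have ptw: "\<And>x. e2ennreal (ereal (g x) + h x) * indicator A x + ennreal (- (indicator A x * g x))
     = e2ennreal (- (ereal (g x) + h x)) * indicator A x + ennreal (indicator A x * g x) + e2ennreal (h x) * indicator A x"
    using ptwise_split h0 by (simp split: split_indicator)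
  have "(\<lambda>x. indicator A x * g x) \<in> borel_measurable M" by measurable
  then have gm2: "(\<lambda>x. ereal (indicator A x * g x)) \<in> borel_measurable M" by measurable
  have m1: "(\<lambda>x. e2ennreal (ereal (g x) + h x) * indicator A x) \<in> borel_measurable M"
  proof -
    have "(\<lambda>x. e2ennreal (ereal (indicator A x * g x) + h x * indicator A x)) \<in> borel_measurable M"
      using gm2 by measurable
    moreover have "\<And>x. e2ennreal (ereal (indicator A x * g x) + h x * indicator A x) = e2ennreal (ereal (g x) + h x) * indicator A x"
      by (simp split: split_indicator add: zero_ereal_def[symmetric])
    ultimately show ?thesis by simp
  qed
  have m2: "(\<lambda>x. e2ennreal (- (ereal (g x) + h x)) * indicator A x) \<in> borel_measurable M"
  proof -
    have "(\<lambda>x. e2ennreal (- (ereal (indicator A x * g x) + h x * indicator A x))) \<in> borel_measurable M"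
      using gm2 by measurable
    moreover have "\<And>x. e2ennreal (- (ereal (indicator A x * g x) + h x * indicator A x)) = e2ennreal (- (ereal (g x) + h x)) * indicator A x"
      by (simp split: split_indicator add: zero_ereal_def[symmetric])
    ultimately show ?thesis by simp
  qed
  have "P + Gm = Q + Gp + Hh"
  proof -
    have "P + Gm = (\<integral>\<^sup>+x. e2ennreal (ereal (g x) + h x) * indicator A x + ennreal (- (indicator A x * g x)) \<partial>M)"
      unfolding P_def Gm_def by (rule nn_integral_add[symmetric]) (use m1 in auto)
    also have "\<dots> = (\<integral>\<^sup>+x. e2ennreal (- (ereal (g x) + h x)) * indicator A x + ennreal (indicator A x * g x) + e2ennreal (h x) * indicator A x \<partial>M)"
      by (simp add: ptw)
    also have "\<dots> = (\<integral>\<^sup>+x. e2ennreal (- (ereal (g x) + h x)) * indicator A x + ennreal (indicator A x * g x) \<partial>M) + Hh"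
      unfolding Hh_def by (rule nn_integral_add) (use m2 in auto)
    also have "\<dots> = Q + Gp + Hh"
      unfolding Q_def Gp_def by (subst nn_integral_add) (use m2 in auto)
    finally show ?thesis .
  qed
  have Gp_fin: "Gp < top" and Gm_fin: "Gm < top"
  proof -
    have "(\<integral>\<^sup>+x. ennreal (norm (indicator A x * g x)) \<partial>M) < \<infinity>"
      using gi unfolding integrable_iff_bounded by simp
    moreover have "Gp \<le> (\<integral>\<^sup>+x. ennreal (norm (indicator A x * g x)) \<partial>M)"
      unfolding Gp_def by (rule nn_integral_mono) (simp add: ennreal_leI)
    moreover have "Gm \<le> (\<integral>\<^sup>+x. ennreal (norm (indicator A x * g x)) \<partial>M)"
      unfolding Gm_def by (rule nn_integral_mono) (simp add: ennreal_leI)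
    ultimately show "Gp < top" "Gm < top" by auto
  qed
  have "Q \<le> Gm"
    unfolding Q_def Gm_def
  proof (rule nn_integral_mono)
    fix x
    have "e2ennreal (- (ereal (g x) + h x)) \<le> e2ennreal (ereal (- g x))"
      by (rule e2ennreal_mono) (use h0[of x] in \<open>cases "h x"; auto\<close>)
    then show "e2ennreal (- (ereal (g x) + h x)) * indicator A x \<le> ennreal (- (indicator A x * g x))"
      by (simp split: split_indicator)
  qed
  then have Q_fin: "Q < top" using Gm_fin by auto
  obtain a where a: "Gp = ennreal a" "0 \<le> a" using Gp_fin less_top_ennreal by blast
  obtain b where b: "Gm = ennreal b" "0 \<le> b" using Gm_fin less_top_ennreal by blast
  obtain q where q: "Q = ennreal q" "0 \<le> q" using Q_fin less_top_ennreal by blast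
  have int: "(\<integral>x. indicator A x * g x \<partial>M) = a - b"
    using real_lebesgue_integral_def[OF gi] a b unfolding Gp_def Gm_def by simp
  have eq: "P + ennreal b = ennreal q + ennreal a + Hh" using \<open>P + Gm = Q + Gp + Hh\<close> a b q by simp
  have lhs: "eint_on M A (\<lambda>x. ereal (g x) + h x) = enn2ereal P - enn2ereal Q"
    unfolding eint_on_def P_def Q_def nn_integral_set_ennreal by (simp add: mult.commute)
  have hh: "(\<integral>\<^sup>+x\<in>A. e2ennreal (h x) \<partial>M) = Hh"
    unfolding Hh_def by (simp add: mult.commute)
  show ?thesis
  proof (cases "Hh = top")
    case True
    then have "P = top" using eq by (auto simp: ennreal_add_eq_top)
    then show ?thesis unfolding lhs hh int using True q by simp
  next
    case False
    then obtain c where c: "Hh = ennreal c" "0 \<le> c" using less_top_ennreal top.not_eq_extremum by blast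
    have "P + ennreal b = ennreal q + ennreal a + ennreal c" using eq c by simp
    then have "P + ennreal b < top" by (metis ennreal_add_eq_top ennreal_neq_top top.not_eq_extremum)
    then have "P < top" by (metis ennreal_add_eq_top top.not_eq_extremum)
    then obtain p where p: "P = ennreal p" "0 \<le> p" using less_top_ennreal by blast
    have "ennreal p + ennreal b = ennreal q + ennreal a + ennreal c" using eq p c by simp
    then have "ennreal (p + b) = ennreal (q + a + c)" using p c a b q by (simp only: ennreal_plus add_nonneg_nonneg)
    then have "p + b = q + a + c" using p b q a c by (subst (asm) ennreal_inj) auto
    then show ?thesis unfolding lhs hh int using p q c by simp
  qed
qed


lemma dual_pair_scale: "dual_pair w (h *\<^sub>R v) = h * dual_pair w (v::'a::real_inner \<times> 'a)"
  by (simp add: dual_pair_def algebra_simps)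

lemma deriv_gibbs:
  fixes H dtH :: "real \<Rightarrow> 'a::euclidean_space \<times> 'a \<Rightarrow> real"
  assumes H_C1: "hamiltonian_C1 T H dtH DH" and P: "paths T F \<Psi> \<Psi>'" and t: "t \<in> {0..T}"
  shows "((\<lambda>s. exp (-(\<alpha> + \<beta> * H s (\<Psi> s z)))) has_real_derivative
     (\<beta> * (-(dtH t (\<Psi> t z) + dual_pair (DH t (\<Psi> t z)) (\<Psi>' t z))) * exp (-(\<alpha> + \<beta> * H t (\<Psi> t z))))) (at t within {0..T})"
proof -
  have d1: "((\<lambda>s. (s, \<Psi> s z)) has_derivative (\<lambda>h. (h, h *\<^sub>R \<Psi>' t z))) (at t within {0..T})"
  proof (rule has_derivative_Pair[OF has_derivative_ident])
    have "((\<lambda>s. \<Psi> s z) has_vector_derivative \<Psi>' t z) (at t within {0..T})"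
      using P t unfolding paths_def by blast
    then show "((\<lambda>s. \<Psi> s z) has_derivative (\<lambda>h. h *\<^sub>R \<Psi>' t z)) (at t within {0..T})"
      by (simp add: has_vector_derivative_def)
  qed
  have d2: "\<And>x. x \<in> {0..T}\<times>UNIV \<Longrightarrow> ((\<lambda>(s,w). H s w) has_derivative
      (\<lambda>(ds,dz). ds * dtH (fst x) (snd x) + dual_pair (DH (fst x) (snd x)) dz)) (at x within {0..T}\<times>UNIV)"
    using H_C1 unfolding hamiltonian_C1_def by auto
  have "((\<lambda>s. (\<lambda>(s,w). H s w) (s, \<Psi> s z)) has_derivative
      (\<lambda>h. (\<lambda>(ds,dz). ds * dtH (fst (t, \<Psi> t z)) (snd (t, \<Psi> t z)) + dual_pair (DH (fst (t, \<Psi> t z)) (snd (t, \<Psi> t z))) dz) (h, h *\<^sub>R \<Psi>' t z))) (at t within {0..T})"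
    by (rule has_derivative_in_compose2[OF d2 _ t d1]) auto
  then have "((\<lambda>s. H s (\<Psi> s z)) has_derivative (\<lambda>h. h * dtH t (\<Psi> t z) + h * dual_pair (DH t (\<Psi> t z)) (\<Psi>' t z))) (at t within {0..T})"
    by (simp add: dual_pair_scale)
  then have d3: "((\<lambda>s. H s (\<Psi> s z)) has_real_derivative (dtH t (\<Psi> t z) + dual_pair (DH t (\<Psi> t z)) (\<Psi>' t z))) (at t within {0..T})"
    unfolding has_field_derivative_def
    by (rule has_derivative_eq_rhs) (simp add: fun_eq_iff algebra_simps)
  have d4: "((\<lambda>s. -(\<alpha> + \<beta> * H s (\<Psi> s z))) has_real_derivative -(0 + \<beta> * (dtH t (\<Psi> t z) + dual_pair (DH t (\<Psi> t z)) (\<Psi>' t z)))) (at t within {0..T})"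
    by (rule DERIV_minus[OF DERIV_add[OF DERIV_const DERIV_cmult[OF d3]]])
  have "((\<lambda>s. exp (-(\<alpha> + \<beta> * H s (\<Psi> s z)))) has_real_derivative exp (-(\<alpha> + \<beta> * H t (\<Psi> t z))) * -(0 + \<beta> * (dtH t (\<Psi> t z) + dual_pair (DH t (\<Psi> t z)) (\<Psi>' t z)))) (at t within {0..T})"
    by (rule DERIV_chain'[OF d4 DERIV_exp])
  then show ?thesis
    by (rule DERIV_cong) (simp only: add_0_left mult_minus_right mult_minus_left mult.commute mult.left_commute)
qed

lemma clamp_comp:
  fixes f :: "real \<Rightarrow> 'b::topological_space \<Rightarrow> 'c::topological_space"
  assumes f: "continuous_on ({0..T}\<times>UNIV) (\<lambda>(t,w). f t w)" and q: "continuous_on UNIV q" and T: "0 \<le> T"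
  shows "continuous_on UNIV (\<lambda>p. f (max 0 (min T (fst p))) (q p))"
proof -
  have c1: "continuous_on UNIV (\<lambda>p. max 0 (min T (fst p)))"
    by (rule continuous_on_max[OF continuous_on_const continuous_on_min[OF continuous_on_const continuous_on_fst[OF continuous_on_id]]])
  have c: "continuous_on UNIV (\<lambda>p. (max 0 (min T (fst p)), q p))"
    by (rule continuous_on_Pair[OF c1 q])
  have sub: "(\<lambda>p. (max 0 (min T (fst p)), q p)) ` UNIV \<subseteq> {0..T} \<times> UNIV"
    using T by auto
  have "continuous_on UNIV ((\<lambda>(t,w). f t w) \<circ> (\<lambda>p. (max 0 (min T (fst p)), q p)))"
    by (rule continuous_on_compose[OF c continuous_on_subset[OF f sub]])
  moreover have "((\<lambda>(t,w). f t w) \<circ> (\<lambda>p. (max 0 (min T (fst p)), q p))) = (\<lambda>p. f (max 0 (min T (fst p))) (q p))"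
    by (rule ext) (simp only: comp_apply case_prod_conv)
  ultimately show ?thesis by (simp only:)
qed



lemma lsc_borel:
  fixes f :: "'b::topological_space \<Rightarrow> ereal"
  assumes "ereal_lsc f" shows "f \<in> borel_measurable borel"
proof (rule borel_measurableI_le)
  fix y
  have "closed {x. f x \<le> y}" using assms unfolding ereal_lsc_def by blast
  then show "{x \<in> space borel. f x \<le> y} \<in> sets borel" by simp
qed

lemma conj_lsc: "ereal_lsc (symp_conj \<phi>)"
  unfolding ereal_lsc_def
proof
  fix c :: ereal
  have eq: "{x. symp_conj \<phi> x \<le> c} = (\<Inter>z. {x. ereal (omega x z) - \<phi> z \<le> c})"
    unfolding symp_conj_def by (auto simp: SUP_le_iff)
  have "closed {x. ereal (omega x z) - \<phi> z \<le> c}" for z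
  proof (cases "\<phi> z")
    case (real r)
    have "continuous_on UNIV (\<lambda>x. ereal (omega x z - r))"
      unfolding omega_def dual_pair_def Jmap_def
      by (intro continuous_on_compose2[OF continuous_on_ereal[OF continuous_on_id]] continuous_intros) auto
    then have "closed {x. ereal (omega x z - r) \<le> c}"
      by (intro closed_Collect_le) auto
    then show ?thesis using real by simp
  qed auto
  then show "closed {x. symp_conj \<phi> x \<le> c}" unfolding eq by (intro closed_INT) auto
qed

lemma omega_XH: "omega (v - symp_grad D t x) v = - dual_pair (D t x) (v::'a::real_inner \<times> 'a)"
  by (simp add: omega_def dual_pair_def Jmap_def symp_grad_def Jstar_def inner_diff_left inner_diff_right inner_commute algebra_simps)

lemma eint_on_cong:
  assumes "\<And>x. x \<in> A \<Longrightarrow> f x = g x"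
  shows "eint_on M A f = eint_on M A g"
proof -
  have "(\<integral>\<^sup>+x\<in>A. e2ennreal (f x) \<partial>M) = (\<integral>\<^sup>+x\<in>A. e2ennreal (g x) \<partial>M)"
    by (rule nn_integral_cong) (simp add: assms split: split_indicator)
  moreover have "(\<integral>\<^sup>+x\<in>A. e2ennreal (- f x) \<partial>M) = (\<integral>\<^sup>+x\<in>A. e2ennreal (- g x) \<partial>M)"
    by (rule nn_integral_cong) (simp add: assms split: split_indicator)
  ultimately show ?thesis unfolding eint_on_def by simp
qed


lemma int_bounded_cont:
  fixes f :: "'b::euclidean_space \<Rightarrow> real"
  assumes f: "continuous_on UNIV f" and A: "A \<in> sets borel" and bA: "bounded A"
  shows "integrable lborel (\<lambda>x. indicator A x * f x)"
proof -
  obtain r x0 where r: "A \<subseteq> cball x0 r" using bA unfolding bounded_subset_cball by blast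
  have "compact (f ` cball x0 r)"
    by (rule compact_continuous_image) (auto intro: continuous_on_subset[OF f])
  then have "bounded (f ` cball x0 r)" by (rule compact_imp_bounded)
  then obtain M where M0: "\<forall>y\<in>f ` cball x0 r. norm y \<le> M" unfolding bounded_iff by blast
  have M: "\<And>x. x \<in> cball x0 r \<Longrightarrow> \<bar>f x\<bar> \<le> M" using M0 by simp
  have "integrable lborel (\<lambda>x. M * indicator (cball x0 r) x)"
    by (intro integrable_mult_right integrable_real_indicator) (use emeasure_bounded_finite[OF bounded_cball] in auto)
  moreover have "(\<lambda>x. indicator A x * f x) \<in> borel_measurable lborel"
  proof -
    have [measurable]: "f \<in> borel_measurable borel" by (rule borel_measurable_continuous_onI[OF f])
    show ?thesis using A by measurable
  qed
  moreover have "AE x in lborel. norm (indicator A x * f x) \<le> norm (M * indicator (cball x0 r) x :: real)"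
  proof (rule AE_I2)
    fix x
    show "norm (indicator A x * f x) \<le> norm (M * indicator (cball x0 r) x :: real)"
      using M[of x] r by (auto split: split_indicator)
  qed
  ultimately show ?thesis by (rule Bochner_Integration.integrable_bound)
qed

lemma integrand_split:
  assumes "X \<noteq> - \<infinity>"
  shows "X - ereal d = ereal (- (d + u)) + (X - ereal (- u))"
  using assms by (cases X) auto



lemma main:
  fixes T \<alpha> \<beta> :: real
    and H dtH :: "real \<Rightarrow> 'a::euclidean_space \<times> 'a \<Rightarrow> real"
    and DH :: "real \<Rightarrow> 'a \<times> 'a \<Rightarrow> 'a \<times> 'a"
    and \<phi> :: "'a \<times> 'a \<Rightarrow> ereal"
    and F :: "'a \<times> 'a \<Rightarrow> 'a \<times> 'a"
    and \<Psi> \<Psi>' :: "real \<Rightarrow> 'a \<times> 'a \<Rightarrow> 'a \<times> 'a"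
    and B :: "('a \<times> 'a) set"
  assumes T_pos: "0 < T" and beta_pos: "0 < \<beta>"
    and H_C1: "hamiltonian_C1 T H dtH DH"
    and phi_lsc: "ereal_lsc \<phi>"
    and phi_not_minf: "\<forall>z. \<phi> z \<noteq> - \<infinity>"
    and P: "paths T F \<Psi> \<Psi>'" and R: "path_regular T \<Psi> \<Psi>'"
    and B_borel: "B \<in> sets borel" and B_bounded: "bounded B"
  shows "\<exists>I K. enn2ereal (emeasure (gibbs H \<alpha> \<beta> T F) B) - enn2ereal (emeasure (gibbs H \<alpha> \<beta> 0 id) B) = ereal (\<beta> * I)
     \<and> cost T H dtH DH \<phi> \<alpha> \<beta> \<Psi> \<Psi>' B = ereal I + enn2ereal K
     \<and> (K = 0 \<longleftrightarrow> (AE p in (lborel \<Otimes>\<^sub>M lborel). fst p \<in> {0..T} \<longrightarrow> snd p \<in> B \<longrightarrow>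
          \<phi> (\<Psi>' (fst p) (snd p)) + symp_conj \<phi> (\<Psi>' (fst p) (snd p) - symp_grad DH (fst p) (\<Psi> (fst p) (snd p)))
          - ereal (omega (\<Psi>' (fst p) (snd p) - symp_grad DH (fst p) (\<Psi> (fst p) (snd p))) (\<Psi>' (fst p) (snd p))) = 0))"
proof -
  define S where "S = {0..T}"
  define c where "c = (\<lambda>t. max 0 (min T t))"
  have cS: "c t = t" if "t \<in> S" for t using that by (auto simp: S_def c_def)
  have T0: "0 \<le> T" using T_pos by simp
  have cH: "continuous_on (S\<times>UNIV) (\<lambda>(t,w). H t w)"
  proof (rule continuous_on_eq_continuous_within[THEN iffD2], rule ballI)
    fix x assume x: "x \<in> S \<times> (UNIV :: ('a\<times>'a) set)"
    then obtain t w where x': "x = (t,w)" "t \<in> S" by auto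
    have "((\<lambda>(s,w). H s w) has_derivative (\<lambda>(ds, dz). ds * dtH t w + dual_pair (DH t w) dz)) (at (t,w) within S\<times>UNIV)"
      using H_C1 x'(2) unfolding hamiltonian_C1_def S_def by blast
    then show "continuous (at x within S\<times>UNIV) (\<lambda>(t,w). H t w)" using x' by (auto dest: has_derivative_continuous)
  qed
  have cdt: "continuous_on (S\<times>UNIV) (\<lambda>(t,w). dtH t w)" and cDH: "continuous_on (S\<times>UNIV) (\<lambda>(t,w). DH t w)"
    using H_C1 unfolding hamiltonian_C1_def S_def by auto
  have cPs: "continuous_on (S\<times>UNIV) (\<lambda>(t,z). \<Psi> t z)" and cPs': "continuous_on (S\<times>UNIV) (\<lambda>(t,z). \<Psi>' t z)"
    using R unfolding path_regular_def S_def by auto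
  have qs: "continuous_on UNIV (\<lambda>p::real\<times>('a\<times>'a). snd p)" by (intro continuous_intros)
  define ps where "ps = (\<lambda>p::real\<times>('a\<times>'a). \<Psi> (c (fst p)) (snd p))"
  define ps' where "ps' = (\<lambda>p::real\<times>('a\<times>'a). \<Psi>' (c (fst p)) (snd p))"
  define e where "e = (\<lambda>p. exp (- (\<alpha> + \<beta> * H (c (fst p)) (ps p))))"
  define gg where "gg = (\<lambda>p. - (dtH (c (fst p)) (ps p) + dual_pair (DH (c (fst p)) (ps p)) (ps' p)))"
  define w where "w = (\<lambda>p. ps' p - symp_grad DH (c (fst p)) (ps p))"
  define hh where "hh = (\<lambda>p. \<phi> (ps' p) + symp_conj \<phi> (w p) - ereal (omega (w p) (ps' p)))"
  have cont_ps: "continuous_on UNIV ps"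
    unfolding ps_def c_def using clamp_comp[OF cPs[unfolded S_def] qs T0] by simp
  have cont_ps': "continuous_on UNIV ps'"
    unfolding ps'_def c_def using clamp_comp[OF cPs'[unfolded S_def] qs T0] by simp
  have cont_H: "continuous_on UNIV (\<lambda>p. H (c (fst p)) (ps p))"
    unfolding c_def using clamp_comp[OF cH[unfolded S_def] cont_ps T0] by simp
  have cont_dt: "continuous_on UNIV (\<lambda>p. dtH (c (fst p)) (ps p))"
    unfolding c_def using clamp_comp[OF cdt[unfolded S_def] cont_ps T0] by simp
  have cont_DH: "continuous_on UNIV (\<lambda>p. DH (c (fst p)) (ps p))"
    unfolding c_def using clamp_comp[OF cDH[unfolded S_def] cont_ps T0] by simp
  have cont_e: "continuous_on UNIV e"
    unfolding e_def by (intro continuous_intros cont_H)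
  have cont_gg: "continuous_on UNIV gg"
    unfolding gg_def dual_pair_def by (intro continuous_intros cont_dt cont_DH cont_ps')
  have cont_w: "continuous_on UNIV w"
    unfolding w_def symp_grad_def Jstar_def by (intro continuous_intros cont_DH cont_ps')
  have cont_om: "continuous_on UNIV (\<lambda>p. omega (w p) (ps' p))"
    unfolding omega_def dual_pair_def Jmap_def by (intro continuous_intros cont_w cont_ps')
  have cont_ge: "continuous_on UNIV (\<lambda>p. gg p * e p)"
    by (intro continuous_intros cont_gg cont_e)
  have me[measurable]: "e \<in> borel_measurable borel" by (rule borel_measurable_continuous_onI[OF cont_e])
  have mgg[measurable]: "gg \<in> borel_measurable borel" by (rule borel_measurable_continuous_onI[OF cont_gg])
  have m1: "(\<lambda>p. \<phi> (ps' p)) \<in> borel_measurable borel"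
    by (rule measurable_compose[OF borel_measurable_continuous_onI[OF cont_ps'] lsc_borel[OF phi_lsc]])
  have m2: "(\<lambda>p. symp_conj \<phi> (w p)) \<in> borel_measurable borel"
    by (rule measurable_compose[OF borel_measurable_continuous_onI[OF cont_w] lsc_borel[OF conj_lsc]])
  have m3: "(\<lambda>p. omega (w p) (ps' p)) \<in> borel_measurable borel"
    by (rule borel_measurable_continuous_onI[OF cont_om])
  have mhh[measurable]: "hh \<in> borel_measurable borel"
    unfolding hh_def using m1 m2 m3 by measurable
  have fen: "ereal (omega (w p) (ps' p)) \<le> \<phi> (ps' p) + symp_conj \<phi> (w p)" for p
    using fenchel_ge[of \<phi> "ps' p" "w p"] phi_not_minf by simp
  have hh0: "0 \<le> hh p" for p
    using fen[of p] unfolding hh_def by (cases "\<phi> (ps' p) + symp_conj \<phi> (w p)") auto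
  have LL: "(lborel \<Otimes>\<^sub>M lborel :: (real \<times> ('a\<times>'a)) measure) = lborel" by (rule lborel_prod)
  have SB: "S \<times> B \<in> sets borel"
  proof -
    have "S \<times> B \<in> sets (lborel \<Otimes>\<^sub>M lborel :: (real \<times> ('a\<times>'a)) measure)"
      using B_borel by (intro pair_measureI) (auto simp: S_def)
    then show ?thesis unfolding LL by simp
  qed
  have bSB: "bounded (S \<times> B)" unfolding S_def by (intro bounded_Times B_bounded bounded_closed_interval)
  define K0 where "K0 = (\<lambda>p. indicator (S \<times> B) p * (gg p * e p))"
  have int_K0: "integrable (lborel \<Otimes>\<^sub>M lborel) K0"
    unfolding LL K0_def by (rule int_bounded_cont[OF cont_ge SB bSB])
  have Pz: "\<forall>z. \<Psi> 0 z = z \<and> \<Psi> T z = F z" using P unfolding paths_def by (rule conjunct1)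
  have PT: "\<Psi> T z = F z" and P0: "\<Psi> 0 z = z" for z using spec[OF Pz, of z] by simp_all
  have eT: "exp (- (\<alpha> + \<beta> * H T (F z))) = e (T, z)" for z
    using PT T0 unfolding e_def ps_def c_def by (simp add: max_def min_def)
  have e0: "exp (- (\<alpha> + \<beta> * H 0 z)) = e (0, z)" for z
    using P0 T0 unfolding e_def ps_def c_def by (simp add: max_def min_def)
  have ftc: "\<beta> * (\<integral>t. K0 (t, z) \<partial>lborel) = indicator B z * (e (T, z) - e (0, z))" for z
  proof -
    have der: "((\<lambda>s. exp (- (\<alpha> + \<beta> * H s (\<Psi> s z)))) has_vector_derivative (\<beta> * gg (t, z) * e (t, z))) (at t within {0..T})"
      if t: "t \<in> {0..T}" for t
    proof -
      have "c t = t" using cS t by (simp add: S_def)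
      then show ?thesis
        using deriv_gibbs[OF H_C1 P t, of \<alpha> \<beta> z]
        unfolding has_real_derivative_iff_has_vector_derivative gg_def e_def ps_def ps'_def
        by simp
    qed
    have hi: "((\<lambda>t. \<beta> * gg (t, z) * e (t, z)) has_integral
        (exp (- (\<alpha> + \<beta> * H T (\<Psi> T z))) - exp (- (\<alpha> + \<beta> * H 0 (\<Psi> 0 z))))) {0..T}"
      by (rule fundamental_theorem_of_calculus[OF T0 der])
    have ci: "continuous_on {0..T} (\<lambda>t. \<beta> * gg (t, z) * e (t, z))"
    proof -
      have "continuous_on UNIV (\<lambda>p. \<beta> * gg p * e p)" by (intro continuous_intros cont_gg cont_e)
      moreover have "continuous_on {0..T} (\<lambda>t::real. (t, z))" by (intro continuous_intros)
      ultimately show ?thesis by (rule continuous_on_compose2) auto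
    qed
    have si: "set_integrable lborel {0..T} (\<lambda>t. \<beta> * gg (t, z) * e (t, z))"
      by (rule borel_integrable_atLeastAtMost'[OF ci])
    have L: "(LINT t:{0..T}|lborel. \<beta> * gg (t, z) * e (t, z)) = e (T, z) - e (0, z)"
      using set_borel_integral_eq_integral(2)[OF si] integral_unique[OF hi] eT[of z] e0[of z] PT[of z] P0[of z]
      by simp
    have "\<beta> * (\<integral>t. K0 (t, z) \<partial>lborel) = (\<integral>t. indicator B z * (indicator {0..T} t *\<^sub>R (\<beta> * gg (t, z) * e (t, z))) \<partial>lborel)"
    proof -
      have eq: "\<And>t. indicator B z * (indicator {0..T} t *\<^sub>R (\<beta> * gg (t, z) * e (t, z))) = \<beta> * K0 (t, z)"
        by (auto simp: K0_def S_def indicator_times split: split_indicator)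
      show ?thesis by (simp only: eq integral_mult_right_zero)
    qed
    also have "\<dots> = indicator B z * (LINT t:{0..T}|lborel. \<beta> * gg (t, z) * e (t, z))"
      unfolding set_lebesgue_integral_def by (rule integral_mult_right_zero)
    finally show ?thesis using L by simp
  qed
  have Fub: "(\<integral>z. (\<integral>t. K0 (t, z) \<partial>lborel) \<partial>lborel) = (\<integral>t. (\<integral>z. K0 (t, z) \<partial>lborel) \<partial>lborel)"
    using lborel_pair.Fubini_integral[of "\<lambda>t z. K0 (t, z)"] int_K0 by simp
  define G where "G = (\<lambda>t. \<integral>z. K0 (t, z) \<partial>lborel)"
  define I where "I = (\<integral>t. G t \<partial>lborel)"
  have cont_eT: "continuous_on UNIV (\<lambda>z. e (s, z))" for s
    by (rule continuous_on_compose2[OF cont_e]) (auto intro: continuous_intros)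
  have gibbs_eq: "emeasure (density lborel (\<lambda>z. ennreal (e (s, z)))) B = ennreal (\<integral>z. indicator B z * e (s, z) \<partial>lborel)" for s
  proof -
    have m: "(\<lambda>z. ennreal (e (s, z))) \<in> borel_measurable lborel"
      using borel_measurable_continuous_onI[OF cont_eT[of s]] by measurable
    have "emeasure (density lborel (\<lambda>z. ennreal (e (s, z)))) B = (\<integral>\<^sup>+z. ennreal (e (s, z)) * indicator B z \<partial>lborel)"
      by (rule emeasure_density[OF m]) (use B_borel in simp)
    also have "\<dots> = (\<integral>\<^sup>+z. ennreal (indicator B z * e (s, z)) \<partial>lborel)"
      by (rule nn_integral_cong) (simp split: split_indicator)
    also have "\<dots> = ennreal (\<integral>z. indicator B z * e (s, z) \<partial>lborel)"
      by (rule nn_integral_eq_integral[OF int_bounded_cont[OF cont_eT B_borel B_bounded]])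
         (auto simp: e_def)
    finally show ?thesis .
  qed
  have gT: "gibbs H \<alpha> \<beta> T F = density lborel (\<lambda>z. ennreal (e (T, z)))"
    unfolding gibbs_def using eT by simp
  have g0: "gibbs H \<alpha> \<beta> 0 id = density lborel (\<lambda>z. ennreal (e (0, z)))"
    unfolding gibbs_def using e0 by simp
  have intT: "integrable lborel (\<lambda>z. indicator B z * e (T, z))" by (rule int_bounded_cont[OF cont_eT B_borel B_bounded])
  have int0: "integrable lborel (\<lambda>z. indicator B z * e (0, z))" by (rule int_bounded_cont[OF cont_eT B_borel B_bounded])
  have LHS: "enn2ereal (emeasure (gibbs H \<alpha> \<beta> T F) B) - enn2ereal (emeasure (gibbs H \<alpha> \<beta> 0 id) B) = ereal (\<beta> * I)"
  proof -
    have nT: "0 \<le> (\<integral>z. indicator B z * e (T, z) \<partial>lborel)" by (rule Bochner_Integration.integral_nonneg) (auto simp: e_def)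
    have n0: "0 \<le> (\<integral>z. indicator B z * e (0, z) \<partial>lborel)" by (rule Bochner_Integration.integral_nonneg) (auto simp: e_def)
    have "enn2ereal (emeasure (gibbs H \<alpha> \<beta> T F) B) - enn2ereal (emeasure (gibbs H \<alpha> \<beta> 0 id) B)
        = ereal ((\<integral>z. indicator B z * e (T, z) \<partial>lborel) - (\<integral>z. indicator B z * e (0, z) \<partial>lborel))"
      unfolding gT g0 gibbs_eq using nT n0 by simp
    also have "(\<integral>z. indicator B z * e (T, z) \<partial>lborel) - (\<integral>z. indicator B z * e (0, z) \<partial>lborel)
        = (\<integral>z. indicator B z * (e (T, z) - e (0, z)) \<partial>lborel)"
      using Bochner_Integration.integral_diff[OF intT int0] by (simp add: algebra_simps)
    also have "\<dots> = (\<integral>z. \<beta> * (\<integral>t. K0 (t, z) \<partial>lborel) \<partial>lborel)"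
      by (simp add: ftc)
    also have "\<dots> = \<beta> * I"
      unfolding I_def G_def Fub[symmetric] by simp
    finally show ?thesis .
  qed
  define N where "N = (\<lambda>t. \<integral>\<^sup>+z. ennreal (e (t, z)) * (e2ennreal (hh (t, z)) * indicator B z) \<partial>lborel)"
  have mPair: "(\<lambda>z. (t, z)) \<in> borel_measurable borel" for t :: real
    by (rule borel_measurable_continuous_onI) (intro continuous_intros)
  have mhz: "(\<lambda>z. hh (t, z)) \<in> borel_measurable borel" for t
    by (rule measurable_compose[OF mPair mhh])
  have mez: "(\<lambda>z. e (t, z)) \<in> borel_measurable borel" for t
    by (rule measurable_compose[OF mPair me])
  have mgz: "(\<lambda>z. gg (t, z)) \<in> borel_measurable borel" for t
    by (rule measurable_compose[OF mPair mgg])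
  have Gout: "G t = 0" if "t \<notin> S" for t
    using that unfolding G_def K0_def by (simp add: indicator_times)
  have inner: "eint_on (gibbs H \<alpha> \<beta> t (\<Psi> t)) B (\<lambda>z. \<phi> (\<Psi>' t z) + symp_conj \<phi> (\<Psi>' t z - symp_grad DH t (\<Psi> t z)) - ereal (dtH t (\<Psi> t z)))
      = ereal (G t) + enn2ereal (N t)" if t: "t \<in> S" for t
  proof -
    have ct: "c t = t" by (rule cS[OF t])
    have gt: "gibbs H \<alpha> \<beta> t (\<Psi> t) = density lborel (\<lambda>z. ennreal (e (t, z)))"
      unfolding gibbs_def e_def ps_def using ct by simp
    have integ: "\<phi> (\<Psi>' t z) + symp_conj \<phi> (\<Psi>' t z - symp_grad DH t (\<Psi> t z)) - ereal (dtH t (\<Psi> t z))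
        = ereal (gg (t, z)) + hh (t, z)" for z
    proof -
      have X: "\<phi> (ps' (t,z)) + symp_conj \<phi> (w (t,z)) \<noteq> - \<infinity>"
        using fen[of "(t,z)"] by (cases "\<phi> (ps' (t,z)) + symp_conj \<phi> (w (t,z))") auto
      show ?thesis
        using integrand_split[OF X, of "dtH t (\<Psi> t z)" "dual_pair (DH t (\<Psi> t z)) (\<Psi>' t z)"]
        unfolding gg_def hh_def w_def ps_def ps'_def using ct by (simp add: omega_XH)
    qed
    have sd: "sets (density lborel (\<lambda>z. ennreal (e (t, z)))) = sets borel" by simp
    have mh: "(\<lambda>z. hh (t, z)) \<in> borel_measurable (density lborel (\<lambda>z. ennreal (e (t, z))))"
      using measurable_cong_sets[OF sd refl] mhz by simp
    have i1: "integrable lborel (\<lambda>z. indicator B z * (gg (t, z) * e (t, z)))"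
      by (rule int_bounded_cont[OF _ B_borel B_bounded])
         (rule continuous_on_compose2[OF cont_ge], auto intro: continuous_intros)
    have eqf: "(\<lambda>z. e (t, z) *\<^sub>R (indicator B z * gg (t, z))) = (\<lambda>z. indicator B z * (gg (t, z) * e (t, z)))"
      by (rule ext) (simp add: ac_simps)
    have mf: "(\<lambda>z. indicator B z * gg (t, z)) \<in> borel_measurable lborel"
      using mgz B_borel by measurable
    have intg: "integrable (density lborel (\<lambda>z. ennreal (e (t, z)))) (\<lambda>z. indicator B z * gg (t, z))"
      using integrable_density[of "\<lambda>z. indicator B z * gg (t, z)" lborel "\<lambda>z. e (t, z)"] mf mez i1 eqf
      by (simp add: e_def)
    have sp: "eint_on (density lborel (\<lambda>z. ennreal (e (t, z)))) B (\<lambda>z. ereal (gg (t, z)) + hh (t, z))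
       = ereal (\<integral>z. indicator B z * gg (t, z) \<partial>density lborel (\<lambda>z. ennreal (e (t, z))))
         + enn2ereal (\<integral>\<^sup>+z\<in>B. e2ennreal (hh (t, z)) \<partial>density lborel (\<lambda>z. ennreal (e (t, z))))"
      by (rule eint_on_split[OF _ intg mh hh0]) (use B_borel in simp)
    have a: "(\<integral>z. indicator B z * gg (t, z) \<partial>density lborel (\<lambda>z. ennreal (e (t, z)))) = G t"
    proof -
      have "(\<integral>z. indicator B z * gg (t, z) \<partial>density lborel (\<lambda>z. ennreal (e (t, z))))
          = (\<integral>z. e (t, z) *\<^sub>R (indicator B z * gg (t, z)) \<partial>lborel)"
        by (rule integral_density[OF mf]) (use mez[of t] in \<open>simp_all add: e_def\<close>)
      also have "\<dots> = G t" unfolding eqf G_def K0_def using t by (simp add: indicator_times)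
      finally show ?thesis .
    qed
    have b: "(\<integral>\<^sup>+z\<in>B. e2ennreal (hh (t, z)) \<partial>density lborel (\<lambda>z. ennreal (e (t, z)))) = N t"
    proof -
      have "(\<lambda>z. e2ennreal (hh (t, z)) * indicator B z) \<in> borel_measurable lborel"
        using mhz B_borel by measurable
      moreover have "(\<lambda>z. ennreal (e (t, z))) \<in> borel_measurable lborel" using mez by measurable
      ultimately show ?thesis unfolding N_def by (simp add: nn_integral_density)
    qed
    show ?thesis unfolding gt integ sp a b ..
  qed
  have cost_eq: "cost T H dtH DH \<phi> \<alpha> \<beta> \<Psi> \<Psi>' B = eint_on lborel S (\<lambda>t. ereal (G t) + enn2ereal (N t))"
    unfolding cost_def S_def[symmetric] by (rule eint_on_cong) (rule inner)
  have intG0: "integrable lborel G"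
    using lborel_pair.integrable_fst'[OF int_K0] unfolding G_def by simp
  have indG: "(\<lambda>t. indicator S t * G t) = G" by (rule ext) (auto simp: Gout split: split_indicator)
  have intG: "integrable lborel (\<lambda>t. indicator S t * G t)" unfolding indG by (rule intG0)
  define Fm where "Fm = (\<lambda>p. ennreal (e p) * (e2ennreal (hh p) * indicator B (snd p)) * indicator S (fst p))"
  have msnd: "(\<lambda>p::real\<times>('a\<times>'a). snd p) \<in> borel_measurable borel"
    by (rule borel_measurable_continuous_onI) (intro continuous_intros)
  have mfst: "(\<lambda>p::real\<times>('a\<times>'a). fst p) \<in> borel_measurable borel"
    by (rule borel_measurable_continuous_onI) (intro continuous_intros)
  have msB[measurable]: "(\<lambda>p::real\<times>('a\<times>'a). indicator B (snd p) :: ennreal) \<in> borel_measurable borel"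
    by (rule measurable_compose[OF msnd borel_measurable_indicator[OF B_borel]])
  have msS[measurable]: "(\<lambda>p::real\<times>('a\<times>'a). indicator S (fst p) :: ennreal) \<in> borel_measurable borel"
    by (rule measurable_compose[OF mfst borel_measurable_indicator]) (simp add: S_def)
  have mFm: "Fm \<in> borel_measurable (lborel \<Otimes>\<^sub>M lborel)"
    unfolding LL Fm_def by simp measurable
  have mFz: "(\<lambda>z. ennreal (e (t, z)) * (e2ennreal (hh (t, z)) * indicator B z)) \<in> borel_measurable lborel" for t
    using mez mhz B_borel by measurable
  have mN: "N \<in> borel_measurable lborel"
  proof -
    have "(\<lambda>p. ennreal (e p) * (e2ennreal (hh p) * indicator B (snd p))) \<in> borel_measurable (lborel \<Otimes>\<^sub>M lborel)"
      unfolding LL by simp measurable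
    then have "(\<lambda>(t, z). ennreal (e (t, z)) * (e2ennreal (hh (t, z)) * indicator B z)) \<in> borel_measurable (lborel \<Otimes>\<^sub>M lborel)"
      by (simp add: case_prod_beta')
    from lborel.borel_measurable_nn_integral[OF this]
    show ?thesis unfolding N_def .
  qed
  have sp2: "eint_on lborel S (\<lambda>t. ereal (G t) + enn2ereal (N t))
      = ereal (\<integral>t. indicator S t * G t \<partial>lborel) + enn2ereal (\<integral>\<^sup>+t\<in>S. e2ennreal (enn2ereal (N t)) \<partial>lborel)"
    by (rule eint_on_split[OF _ intG]) (use mN in \<open>auto simp: S_def\<close>)
  define K where "K = (\<integral>\<^sup>+t. N t * indicator S t \<partial>lborel)"
  have COST: "cost T H dtH DH \<phi> \<alpha> \<beta> \<Psi> \<Psi>' B = ereal I + enn2ereal K"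
    unfolding cost_eq sp2 indG K_def I_def by simp
  have K_eq: "K = integral\<^sup>N (lborel \<Otimes>\<^sub>M lborel) Fm"
  proof -
    have "K = (\<integral>\<^sup>+t. (\<integral>\<^sup>+z. Fm (t, z) \<partial>lborel) \<partial>lborel)"
      unfolding K_def N_def Fm_def by (simp add: nn_integral_multc[OF mFz])
    also have "\<dots> = integral\<^sup>N (lborel \<Otimes>\<^sub>M lborel) Fm"
      by (rule lborel.nn_integral_fst[OF mFm])
    finally show ?thesis .
  qed
  have ptw: "(Fm p = 0) \<longleftrightarrow> (fst p \<in> {0..T} \<longrightarrow> snd p \<in> B \<longrightarrow>
          \<phi> (\<Psi>' (fst p) (snd p)) + symp_conj \<phi> (\<Psi>' (fst p) (snd p) - symp_grad DH (fst p) (\<Psi> (fst p) (snd p)))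
          - ereal (omega (\<Psi>' (fst p) (snd p) - symp_grad DH (fst p) (\<Psi> (fst p) (snd p))) (\<Psi>' (fst p) (snd p))) = 0)" for p
  proof (cases "fst p \<in> S \<and> snd p \<in> B")
    case True
    then have ct: "c (fst p) = fst p" using cS by blast
    have hheq: "hh p = \<phi> (\<Psi>' (fst p) (snd p)) + symp_conj \<phi> (\<Psi>' (fst p) (snd p) - symp_grad DH (fst p) (\<Psi> (fst p) (snd p)))
          - ereal (omega (\<Psi>' (fst p) (snd p) - symp_grad DH (fst p) (\<Psi> (fst p) (snd p))) (\<Psi>' (fst p) (snd p)))"
      unfolding hh_def w_def ps_def ps'_def using ct by simp
    have epos: "ennreal (e p) \<noteq> 0" unfolding e_def by simp
    have "Fm p = ennreal (e p) * e2ennreal (hh p)" unfolding Fm_def using True by simp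
    moreover have "e2ennreal (hh p) = 0 \<longleftrightarrow> hh p = 0"
      using hh0[of p] by (cases "hh p") (auto simp: ennreal_eq_0_iff)
    ultimately show ?thesis using True epos hheq by (auto simp: S_def)
  next
    case False
    then show ?thesis unfolding Fm_def by (auto simp: S_def)
  qed
  have AEq: "(K = 0) \<longleftrightarrow> (AE p in (lborel \<Otimes>\<^sub>M lborel). fst p \<in> {0..T} \<longrightarrow> snd p \<in> B \<longrightarrow>
          \<phi> (\<Psi>' (fst p) (snd p)) + symp_conj \<phi> (\<Psi>' (fst p) (snd p) - symp_grad DH (fst p) (\<Psi> (fst p) (snd p)))
          - ereal (omega (\<Psi>' (fst p) (snd p) - symp_grad DH (fst p) (\<Psi> (fst p) (snd p))) (\<Psi>' (fst p) (snd p))) = 0)"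
    unfolding K_eq nn_integral_0_iff_AE[OF mFm] by (rule AE_cong) (rule ptw)
  show ?thesis using LHS COST AEq by blast
qed

lemma ineq_aux:
  assumes b: "0 < \<beta>"
  shows "ereal (\<beta> * I) \<le> ereal \<beta> * (ereal I + enn2ereal K)"
    and "(ereal (\<beta> * I) = ereal \<beta> * (ereal I + enn2ereal K)) \<longleftrightarrow> K = 0"
proof -
  have "ereal (\<beta> * I) \<le> ereal \<beta> * (ereal I + enn2ereal K) \<and> ((ereal (\<beta> * I) = ereal \<beta> * (ereal I + enn2ereal K)) \<longleftrightarrow> K = 0)"
  proof (cases "K = top")
    case True
    then show ?thesis using b by simp
  next
    case False
    then obtain k where k: "K = ennreal k" "0 \<le> k" using less_top_ennreal top.not_eq_extremum by blast
    have "ereal \<beta> * (ereal I + enn2ereal K) = ereal (\<beta> * I + \<beta> * k)" using k by (simp add: algebra_simps)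
    moreover have "0 \<le> \<beta> * k" using b k by simp
    moreover have "\<beta> * k = 0 \<longleftrightarrow> k = 0" using b by simp
    moreover have "K = 0 \<longleftrightarrow> k = 0" using k by (simp add: ennreal_eq_0_iff)
    ultimately show ?thesis by auto
  qed
  then show "ereal (\<beta> * I) \<le> ereal \<beta> * (ereal I + enn2ereal K)"
    and "(ereal (\<beta> * I) = ereal \<beta> * (ereal I + enn2ereal K)) \<longleftrightarrow> K = 0" by auto
qed

lemma hh_iff1:
  "(X - ereal a = 0) \<longleftrightarrow> (ereal a = X)"
  by (cases X) auto

theorem theorem3p1:
  fixes T \<alpha> \<beta> :: real
    and H dtH :: "real \<Rightarrow> 'a::euclidean_space \<times> 'a \<Rightarrow> real"
    and DH :: "real \<Rightarrow> 'a \<times> 'a \<Rightarrow> 'a \<times> 'a"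
    and \<phi> :: "'a \<times> 'a \<Rightarrow> ereal"
    and F :: "'a \<times> 'a \<Rightarrow> 'a \<times> 'a"
    and \<Psi> \<Psi>' :: "real \<Rightarrow> 'a \<times> 'a \<Rightarrow> 'a \<times> 'a"
    and B :: "('a \<times> 'a) set"
  assumes T_pos: "0 < T"
    and beta_pos: "0 < \<beta>"
    and H_C1: "hamiltonian_C1 T H dtH DH"
    and phi_convex: "ereal_convex \<phi>"
    and phi_lsc: "ereal_lsc \<phi>"
    and phi_not_minf: "\<forall>z. \<phi> z \<noteq> - \<infinity>"
    and Psi_path: "paths T F \<Psi> \<Psi>'"
    and Psi_reg: "path_regular T \<Psi> \<Psi>'"
    and B_borel: "B \<in> sets borel"
    and B_bounded: "bounded B"
  shows
    "enn2ereal (emeasure (gibbs H \<alpha> \<beta> T F) B) - enn2ereal (emeasure (gibbs H \<alpha> \<beta> 0 id) B)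
       \<le> ereal \<beta> * cost T H dtH DH \<phi> \<alpha> \<beta> \<Psi> \<Psi>' B
   \<and> (cost T H dtH DH \<phi> \<alpha> \<beta> \<Psi> \<Psi>' B < \<infinity> \<longrightarrow>
       ((enn2ereal (emeasure (gibbs H \<alpha> \<beta> T F) B) - enn2ereal (emeasure (gibbs H \<alpha> \<beta> 0 id) B)
           = ereal \<beta> * cost T H dtH DH \<phi> \<alpha> \<beta> \<Psi> \<Psi>' B)
        \<longleftrightarrow> (AE p in (lborel \<Otimes>\<^sub>M lborel). fst p \<in> {0..T} \<longrightarrow> snd p \<in> B \<longrightarrow>
              ereal (omega (\<Psi>' (fst p) (snd p) - symp_grad DH (fst p) (\<Psi> (fst p) (snd p)))
                           (\<Psi>' (fst p) (snd p)))
              = \<phi> (\<Psi>' (fst p) (snd p))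
                + symp_conj \<phi> (\<Psi>' (fst p) (snd p) - symp_grad DH (fst p) (\<Psi> (fst p) (snd p)))))
     \<and> ((enn2ereal (emeasure (gibbs H \<alpha> \<beta> T F) B) - enn2ereal (emeasure (gibbs H \<alpha> \<beta> 0 id) B)
           = ereal \<beta> * cost T H dtH DH \<phi> \<alpha> \<beta> \<Psi> \<Psi>' B)
        \<longleftrightarrow> (AE p in (lborel \<Otimes>\<^sub>M lborel). fst p \<in> {0..T} \<longrightarrow> snd p \<in> B \<longrightarrow>
              \<Psi>' (fst p) (snd p) - symp_grad DH (fst p) (\<Psi> (fst p) (snd p))
                \<in> symp_subdiff \<phi> (\<Psi>' (fst p) (snd p)))))
   \<and> (\<forall>\<Psi>2 \<Psi>2'. paths T F \<Psi>2 \<Psi>2' \<and> path_regular T \<Psi>2 \<Psi>2'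
        \<and> (AE p in (lborel \<Otimes>\<^sub>M lborel). fst p \<in> {0..T} \<longrightarrow> snd p \<in> B \<longrightarrow>
              \<Psi>2' (fst p) (snd p) - symp_grad DH (fst p) (\<Psi>2 (fst p) (snd p))
                \<in> symp_subdiff \<phi> (\<Psi>2' (fst p) (snd p)))
        \<longrightarrow> (\<forall>\<Psi>3 \<Psi>3'. paths T F \<Psi>3 \<Psi>3' \<and> path_regular T \<Psi>3 \<Psi>3' \<longrightarrow>
              cost T H dtH DH \<phi> \<alpha> \<beta> \<Psi>2 \<Psi>2' B \<le> cost T H dtH DH \<phi> \<alpha> \<beta> \<Psi>3 \<Psi>3' B))"
proof -
  have M: "\<exists>I K. enn2ereal (emeasure (gibbs H \<alpha> \<beta> T F) B) - enn2ereal (emeasure (gibbs H \<alpha> \<beta> 0 id) B) = ereal (\<beta> * I)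
     \<and> cost T H dtH DH \<phi> \<alpha> \<beta> \<Psi>1 \<Psi>1' B = ereal I + enn2ereal K
     \<and> (K = 0 \<longleftrightarrow> (AE p in (lborel \<Otimes>\<^sub>M lborel). fst p \<in> {0..T} \<longrightarrow> snd p \<in> B \<longrightarrow>
          ereal (omega (\<Psi>1' (fst p) (snd p) - symp_grad DH (fst p) (\<Psi>1 (fst p) (snd p))) (\<Psi>1' (fst p) (snd p)))
          = \<phi> (\<Psi>1' (fst p) (snd p)) + symp_conj \<phi> (\<Psi>1' (fst p) (snd p) - symp_grad DH (fst p) (\<Psi>1 (fst p) (snd p)))))
     \<and> (K = 0 \<longleftrightarrow> (AE p in (lborel \<Otimes>\<^sub>M lborel). fst p \<in> {0..T} \<longrightarrow> snd p \<in> B \<longrightarrow>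
          \<Psi>1' (fst p) (snd p) - symp_grad DH (fst p) (\<Psi>1 (fst p) (snd p)) \<in> symp_subdiff \<phi> (\<Psi>1' (fst p) (snd p))))"
    if P1: "paths T F \<Psi>1 \<Psi>1'" and R1: "path_regular T \<Psi>1 \<Psi>1'" for \<Psi>1 \<Psi>1'
  proof -
    obtain I K where A: "enn2ereal (emeasure (gibbs H \<alpha> \<beta> T F) B) - enn2ereal (emeasure (gibbs H \<alpha> \<beta> 0 id) B) = ereal (\<beta> * I)"
      and C: "cost T H dtH DH \<phi> \<alpha> \<beta> \<Psi>1 \<Psi>1' B = ereal I + enn2ereal K"
      and E: "K = 0 \<longleftrightarrow> (AE p in (lborel \<Otimes>\<^sub>M lborel). fst p \<in> {0..T} \<longrightarrow> snd p \<in> B \<longrightarrow>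
          \<phi> (\<Psi>1' (fst p) (snd p)) + symp_conj \<phi> (\<Psi>1' (fst p) (snd p) - symp_grad DH (fst p) (\<Psi>1 (fst p) (snd p)))
          - ereal (omega (\<Psi>1' (fst p) (snd p) - symp_grad DH (fst p) (\<Psi>1 (fst p) (snd p))) (\<Psi>1' (fst p) (snd p))) = 0)"
      using main[OF T_pos beta_pos H_C1 phi_lsc phi_not_minf P1 R1 B_borel B_bounded] by blast
    have E1: "K = 0 \<longleftrightarrow> (AE p in (lborel \<Otimes>\<^sub>M lborel). fst p \<in> {0..T} \<longrightarrow> snd p \<in> B \<longrightarrow>
          ereal (omega (\<Psi>1' (fst p) (snd p) - symp_grad DH (fst p) (\<Psi>1 (fst p) (snd p))) (\<Psi>1' (fst p) (snd p)))
          = \<phi> (\<Psi>1' (fst p) (snd p)) + symp_conj \<phi> (\<Psi>1' (fst p) (snd p) - symp_grad DH (fst p) (\<Psi>1 (fst p) (snd p))))"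
      unfolding E hh_iff1 ..
    have E2: "K = 0 \<longleftrightarrow> (AE p in (lborel \<Otimes>\<^sub>M lborel). fst p \<in> {0..T} \<longrightarrow> snd p \<in> B \<longrightarrow>
          \<Psi>1' (fst p) (snd p) - symp_grad DH (fst p) (\<Psi>1 (fst p) (snd p)) \<in> symp_subdiff \<phi> (\<Psi>1' (fst p) (snd p)))"
      unfolding E1 fenchel_eq_iff[OF phi_not_minf] ..
    show ?thesis using A C E1 E2 by blast
  qed
  obtain I K where A: "enn2ereal (emeasure (gibbs H \<alpha> \<beta> T F) B) - enn2ereal (emeasure (gibbs H \<alpha> \<beta> 0 id) B) = ereal (\<beta> * I)"
    and C: "cost T H dtH DH \<phi> \<alpha> \<beta> \<Psi> \<Psi>' B = ereal I + enn2ereal K"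
    and E1: "K = 0 \<longleftrightarrow> (AE p in (lborel \<Otimes>\<^sub>M lborel). fst p \<in> {0..T} \<longrightarrow> snd p \<in> B \<longrightarrow>
          ereal (omega (\<Psi>' (fst p) (snd p) - symp_grad DH (fst p) (\<Psi> (fst p) (snd p))) (\<Psi>' (fst p) (snd p)))
          = \<phi> (\<Psi>' (fst p) (snd p)) + symp_conj \<phi> (\<Psi>' (fst p) (snd p) - symp_grad DH (fst p) (\<Psi> (fst p) (snd p))))"
    and E2: "K = 0 \<longleftrightarrow> (AE p in (lborel \<Otimes>\<^sub>M lborel). fst p \<in> {0..T} \<longrightarrow> snd p \<in> B \<longrightarrow>
          \<Psi>' (fst p) (snd p) - symp_grad DH (fst p) (\<Psi> (fst p) (snd p)) \<in> symp_subdiff \<phi> (\<Psi>' (fst p) (snd p)))"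
    using M[OF Psi_path Psi_reg] by blast
  have part1: "enn2ereal (emeasure (gibbs H \<alpha> \<beta> T F) B) - enn2ereal (emeasure (gibbs H \<alpha> \<beta> 0 id) B)
       \<le> ereal \<beta> * cost T H dtH DH \<phi> \<alpha> \<beta> \<Psi> \<Psi>' B"
    unfolding A C by (rule ineq_aux(1)[OF beta_pos])
  have eqK: "(enn2ereal (emeasure (gibbs H \<alpha> \<beta> T F) B) - enn2ereal (emeasure (gibbs H \<alpha> \<beta> 0 id) B)
       = ereal \<beta> * cost T H dtH DH \<phi> \<alpha> \<beta> \<Psi> \<Psi>' B) \<longleftrightarrow> K = 0"
    unfolding A C by (rule ineq_aux(2)[OF beta_pos])
  have part3: "\<forall>\<Psi>2 \<Psi>2'. paths T F \<Psi>2 \<Psi>2' \<and> path_regular T \<Psi>2 \<Psi>2'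
        \<and> (AE p in (lborel \<Otimes>\<^sub>M lborel). fst p \<in> {0..T} \<longrightarrow> snd p \<in> B \<longrightarrow>
              \<Psi>2' (fst p) (snd p) - symp_grad DH (fst p) (\<Psi>2 (fst p) (snd p))
                \<in> symp_subdiff \<phi> (\<Psi>2' (fst p) (snd p)))
        \<longrightarrow> (\<forall>\<Psi>3 \<Psi>3'. paths T F \<Psi>3 \<Psi>3' \<and> path_regular T \<Psi>3 \<Psi>3' \<longrightarrow>
              cost T H dtH DH \<phi> \<alpha> \<beta> \<Psi>2 \<Psi>2' B \<le> cost T H dtH DH \<phi> \<alpha> \<beta> \<Psi>3 \<Psi>3' B)"
  proof (intro allI impI, elim conjE)
    fix \<Psi>2 \<Psi>2' \<Psi>3 \<Psi>3'
    assume P2: "paths T F \<Psi>2 \<Psi>2'" and R2: "path_regular T \<Psi>2 \<Psi>2'"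
      and AE2: "AE p in (lborel \<Otimes>\<^sub>M lborel). fst p \<in> {0..T} \<longrightarrow> snd p \<in> B \<longrightarrow>
              \<Psi>2' (fst p) (snd p) - symp_grad DH (fst p) (\<Psi>2 (fst p) (snd p))
                \<in> symp_subdiff \<phi> (\<Psi>2' (fst p) (snd p))"
      and P3: "paths T F \<Psi>3 \<Psi>3'" and R3: "path_regular T \<Psi>3 \<Psi>3'"
    obtain I2 K2 where A2: "enn2ereal (emeasure (gibbs H \<alpha> \<beta> T F) B) - enn2ereal (emeasure (gibbs H \<alpha> \<beta> 0 id) B) = ereal (\<beta> * I2)"
      and C2: "cost T H dtH DH \<phi> \<alpha> \<beta> \<Psi>2 \<Psi>2' B = ereal I2 + enn2ereal K2"
      and E2': "K2 = 0 \<longleftrightarrow> (AE p in (lborel \<Otimes>\<^sub>M lborel). fst p \<in> {0..T} \<longrightarrow> snd p \<in> B \<longrightarrow>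
          \<Psi>2' (fst p) (snd p) - symp_grad DH (fst p) (\<Psi>2 (fst p) (snd p)) \<in> symp_subdiff \<phi> (\<Psi>2' (fst p) (snd p)))"
      using M[OF P2 R2] by blast
    obtain I3 K3 where A3: "enn2ereal (emeasure (gibbs H \<alpha> \<beta> T F) B) - enn2ereal (emeasure (gibbs H \<alpha> \<beta> 0 id) B) = ereal (\<beta> * I3)"
      and C3: "cost T H dtH DH \<phi> \<alpha> \<beta> \<Psi>3 \<Psi>3' B = ereal I3 + enn2ereal K3"
      using M[OF P3 R3] by blast
    have K20: "K2 = 0" using E2' AE2 by simp
    have "\<beta> * I2 = \<beta> * I3" using A2 A3 by (metis ereal.inject)
    then have I23: "I2 = I3" using beta_pos by simp
    have "ereal I3 \<le> ereal I3 + enn2ereal K3"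
      using enn2ereal_nonneg[of K3] by (cases "enn2ereal K3") auto
    then show "cost T H dtH DH \<phi> \<alpha> \<beta> \<Psi>2 \<Psi>2' B \<le> cost T H dtH DH \<phi> \<alpha> \<beta> \<Psi>3 \<Psi>3' B"
      unfolding C2 C3 K20 I23 by (simp add: zero_ennreal.rep_eq)
  qed
  show ?thesis using part1 eqK E1 E2 part3 by blast
qed


end
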